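(* Let $\gamma,\lambda\in(0,1)$, $0\le a<b<\infty$ and $H>1$. Let $g:\mathbb R^d\to\mathbb R$ be a bounded, nonnegative, continuous function with $g(x)\le H$ and $|g(x)-g(y)|\le H|x-y|^\gamma$ for all $x,y\in\mathbb R^d$. Then for every $R>1$ and every $r$ with $$0<r<\frac Rb\wedge\Big[\frac1{b-a}\Big(2^{-\frac{\gamma+1}{\gamma}}H^{-\frac d\gamma}R^{d-1}\frac{d\pi^{d/2}}{\Gamma(d/2+1)}\Big)^{\frac1{\gamma+d-1}}\Big],$$ we have $$\Big(\int_{R+ar<|x|<R+br}g(x)\,dx\Big)^{\frac{\gamma\lambda+d}{\gamma+d}}\le N\,R^{\frac{d(d-1)}{\gamma+d}}\big(r(b-a)\big)^{-\frac{d(\gamma+d-1)}{\gamma+d}}\int_{R+ar<|x|<R+br}g(x)^\lambda\,dx,$$ where $N=N(\gamma,\lambda,d,H)$.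
   Context: $\Gamma$ denotes the Gamma function; all integrals are with respect to Lebesgue measure on $\mathbb R^d$. *)

theory Defs
  imports "HOL-Analysis.Analysis"
begin

end

theory Submission
  imports Defs
begin


lemma core_ineq:
  fixes I J m Jl p lam :: real
  assumes "0 \<le> I" "I \<le> m powr (1-lam) * J" "0 < Jl" "Jl \<le> J" "0 < p" "p \<le> 1" "0 \<le> m"
  shows "I powr p \<le> m powr ((1-lam)*p) * Jl powr (p-1) * J"
proof (cases "I = 0")
  case True
  then show ?thesis using assms by simp
next
  case False
  have J0: "0 < J" using assms by linarith
  have "I powr p \<le> (m powr (1-lam) * J) powr p"
    using assms False by (intro powr_mono2) auto
  also have "\<dots> = m powr ((1-lam)*p) * J powr p"
    using assms J0 by (simp add: powr_mult powr_powr)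
  also have "J powr p = J powr (p-1) * J"
    using J0 powr_add[of J "p-1" 1] by simp
  also have "m powr ((1-lam)*p) * (J powr (p-1) * J) \<le> m powr ((1-lam)*p) * (Jl powr (p-1) * J)"
    using assms J0 by (intro mult_left_mono mult_right_mono powr_mono2') auto
  finally show ?thesis by (simp add: mult.assoc)
qed

lemma shell_ball:
  fixes x0 :: "'a::euclidean_space"
  assumes "0 < s" "s < norm x0" "norm x0 < s + L" "0 < del" "4*del \<le> L" "4*del \<le> rho"
  shows "\<exists>y. ball y del \<subseteq> {x. s < norm x \<and> norm x < s + L} \<inter> ball x0 rho"
proof -
  define n0 where "n0 = norm x0"
  define t where "t = min (max n0 (s+del)) (s+L-del)"
  define y where "y = (t / n0) *\<^sub>R x0"
  have n0: "0 < n0" using assms n0_def by auto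
  have t1: "s + del \<le> t" "t \<le> s + L - del" "\<bar>t - n0\<bar> \<le> del" using assms n0_def by (auto simp: t_def)
  have tpos: "0 < t" using t1 assms by linarith
  have ny: "norm y = t" using n0 tpos by (simp add: y_def n0_def)
  have "y - x0 = (t/n0 - 1) *\<^sub>R x0" by (simp add: y_def algebra_simps)
  hence "norm (y - x0) = \<bar>t/n0 - 1\<bar> * n0" by (simp add: n0_def)
  also have "\<dots> = \<bar>t - n0\<bar>" using n0 by (simp add: abs_mult_pos' field_simps abs_div) 
  finally have dy: "norm (y - x0) = \<bar>t - n0\<bar>" .
  show ?thesis
  proof (intro exI subsetI)
    fix z assume "z \<in> ball y del"
    hence zy: "norm (z - y) < del" by (simp add: dist_norm norm_minus_commute)
    have "norm z \<le> norm y + norm (z - y)" by (metis add.commute diff_add_cancel norm_triangle_ineq)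
    moreover have "norm y \<le> norm z + norm (z - y)" by (metis add.commute diff_add_cancel norm_minus_commute norm_triangle_ineq)
    moreover have "norm (z - x0) \<le> norm (z - y) + norm (y - x0)" by (metis diff_add_cancel norm_triangle_ineq add_diff_eq)
    ultimately show "z \<in> {x. s < norm x \<and> norm x < s + L} \<inter> ball x0 rho"
      using zy dy ny t1 assms by (auto simp: dist_norm norm_minus_commute)
  qed
qed



lemma main_part1:
  fixes g :: "'a::euclidean_space \<Rightarrow> real" and a b R r gam lam H :: real
  assumes gam: "0 < gam" "gam < 1" and lam: "0 < lam" "lam < 1" and H1: "H > 1"
    and ab: "0 \<le> a" "a < b"
    and cont: "continuous_on UNIV g"
    and gb: "\<forall>x. 0 \<le> g x \<and> g x \<le> H"
    and hold: "\<forall>x y. \<bar>g x - g y\<bar> \<le> H * norm (x - y) powr gam"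
    and R1: "R > 1" and r0: "0 < r"
  defines "A \<equiv> {x::'a. R + a * r < norm x \<and> norm x < R + b * r}"
  shows "set_integrable lborel A g" "set_integrable lborel A (\<lambda>x. g x powr lam)"
    "A \<in> sets lborel"
proof -
  have Asub: "A \<subseteq> cball 0 (R + b*r)" by (auto simp: A_def)
  have "open A" unfolding A_def
    by (intro open_Collect_conj open_Collect_less continuous_intros)
  thus Am: "A \<in> sets lborel" by simp
  have "set_integrable lborel (cball 0 (R + b*r)) g"
    unfolding set_integrable_def
    by (rule borel_integrable_compact) (auto intro: continuous_on_subset[OF cont])
  thus "set_integrable lborel A g" using Asub Am set_integrable_subset by blast
  have c2: "continuous_on UNIV (\<lambda>x. g x powr lam)"
    by (rule continuous_on_powr') (use cont gb lam in auto)
  have "set_integrable lborel (cball 0 (R + b*r)) (\<lambda>x. g x powr lam)"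
    unfolding set_integrable_def
    by (rule borel_integrable_compact) (auto intro: continuous_on_subset[OF c2])
  thus "set_integrable lborel A (\<lambda>x. g x powr lam)" using Asub Am set_integrable_subset by blast
qed



definition NN :: "real \<Rightarrow> real \<Rightarrow> real \<Rightarrow> real \<Rightarrow> real" where
"NN gam lam H d = (let p = (gam*lam + d)/(gam + d); w = unit_ball_vol d;
  cc = 2 powr (- (gam + 1) / gam) * H powr (- d / gam) * (d * pi powr (d / 2) / Gamma (d / 2 + 1));
  c1 = 4 powr (-lam) * w * 4 powr (-d) * (4*H) powr (-d/gam) in
  c1 powr (p-1) * cc powr (d/(gam+d)) + 4 powr ((lam+d)*(1-p)) * w powr (p-1) * H powr (p-lam))"

lemma main_est:
  fixes g :: "'a::euclidean_space \<Rightarrow> real" and a b R r gam lam H :: real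
  assumes gam: "0 < gam" "gam < 1" and lam: "0 < lam" "lam < 1" and H1: "H > 1"
    and ab: "0 \<le> a" "a < b"
    and cont: "continuous_on UNIV g"
    and gb: "\<forall>x. 0 \<le> g x \<and> g x \<le> H"
    and hold: "\<forall>x y. \<bar>g x - g y\<bar> \<le> H * norm (x - y) powr gam"
    and R1: "R > 1" and r0: "0 < r"
    and rlt: "r < min (R / b)
        (1 / (b - a) * (2 powr (- (gam + 1) / gam) * H powr (- real DIM('a) / gam)
             * R powr (real DIM('a) - 1)
             * (real DIM('a) * pi powr (real DIM('a) / 2) / Gamma (real DIM('a) / 2 + 1)))
           powr (1 / (gam + real DIM('a) - 1)))"
  shows "(LINT x:{x. R + a * r < norm x \<and> norm x < R + b * r}|lborel. g x)
          powr ((gam * lam + real DIM('a)) / (gam + real DIM('a)))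
      \<le> NN gam lam H (real DIM('a)) * R powr (real DIM('a) * (real DIM('a) - 1) / (gam + real DIM('a)))
          * (r * (b - a)) powr (- (real DIM('a) * (gam + real DIM('a) - 1) / (gam + real DIM('a))))
          * (LINT x:{x. R + a * r < norm x \<and> norm x < R + b * r}|lborel. g x powr lam)"
proof -
  define d where "d = real DIM('a)"
  define A where "A = {x::'a. R + a * r < norm x \<and> norm x < R + b * r}"
  define L where "L = r * (b - a)"
  define s where "s = R + a * r"
  define p where "p = (gam*lam + d)/(gam + d)"
  define w where "w = unit_ball_vol d"
  define cc where "cc = 2 powr (- (gam + 1) / gam) * H powr (- d / gam) * (d * pi powr (d / 2) / Gamma (d / 2 + 1))"
  define c1 where "c1 = 4 powr (-lam) * w * 4 powr (-d) * (4*H) powr (-d/gam)"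
  define N1 where "N1 = c1 powr (p-1) * cc powr (d/(gam+d))"
  define N2 where "N2 = 4 powr ((lam+d)*(1-p)) * w powr (p-1) * H powr (p-lam)"
  define al where "al = d * (d - 1) / (gam + d)"
  define be where "be = d * (gam + d - 1) / (gam + d)"
  have NN: "NN gam lam H d = N1 + N2"
    unfolding NN_def N1_def N2_def c1_def cc_def w_def p_def Let_def by simp
  have d1: "1 \<le> d" unfolding d_def using DIM_positive[where 'a='a] by linarith
  have w0: "0 < w" unfolding w_def using d1 by simp
  have cc0: "0 < cc" unfolding cc_def using d1 H1 Gamma_real_pos_exp[of "d/2+1"] by (auto intro!: mult_pos_pos divide_pos_pos)
  have c10: "0 < c1" unfolding c1_def using w0 H1 by simp
  have N10: "0 \<le> N1" "0 \<le> N2" unfolding N1_def N2_def by simp_all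
  have gl0: "0 < gam * lam" using gam lam by simp
  have gl1: "gam * lam < gam" using gam lam by simp
  have p01: "0 < p" "p < 1" unfolding p_def using gam d1 gl0 gl1 by (simp_all add: divide_less_eq)
  have L0: "0 < L" unfolding L_def using ab r0 by simp
  have ar0: "0 \<le> a * r" using ab r0 by simp
  have s1: "1 < s" unfolding s_def using R1 ar0 by linarith
  have sL: "s + L = R + b * r" unfolding s_def L_def by (simp add: algebra_simps)
  have A_eq: "A = {x. s < norm x \<and> norm x < s + L}" unfolding A_def using sL by (simp add: s_def add.assoc)
  note ints = main_part1[OF gam lam H1 ab cont gb hold R1 r0]
  have intg: "set_integrable lborel A g" and intgl: "set_integrable lborel A (\<lambda>x. g x powr lam)"
    and Am: "A \<in> sets lborel" using ints unfolding A_def by auto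
  define I where "I = (LINT x:A|lborel. g x)"
  define J where "J = (LINT x:A|lborel. g x powr lam)"
  have I0: "0 \<le> I" unfolding I_def set_lebesgue_integral_def
    using gb by (intro Bochner_Integration.integral_nonneg) (auto simp: indicator_def)
  have J0: "0 \<le> J" unfolding J_def set_lebesgue_integral_def
    using gb by (intro Bochner_Integration.integral_nonneg) (auto simp: indicator_def)
  have Rab: "1 \<le> cc powr (d/(gam+d)) * R powr al * L powr (-be)"
  proof -
    define e where "e = gam + d - 1"
    define K where "K = cc * R powr (d - 1)"
    have e0: "0 < e" unfolding e_def using gam d1 by simp
    have K0: "0 < K" unfolding K_def using cc0 R1 by simp
    have "r < 1/(b-a) * K powr (1/e)"
      using rlt unfolding K_def cc_def e_def d_def by (simp add: ac_simps)
    hence LK: "L < K powr (1/e)" unfolding L_def using ab by (simp add: field_simps)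
    have "L powr e < (K powr (1/e)) powr e" using LK L0 e0 by (intro powr_less_mono2) auto
    also have "\<dots> = K" using e0 K0 by (simp add: powr_powr)
    finally have LeK: "L powr e < K" .
    have "L powr (-be) = (L powr e) powr (-d/(gam+d))"
      using L0 unfolding be_def e_def by (simp add: powr_powr field_simps)
    also have "\<dots> \<ge> K powr (-d/(gam+d))"
      using LeK L0 gam d1 by (intro powr_mono2') auto
    finally have "K powr (-d/(gam+d)) \<le> L powr (-be)" .
    moreover have "K powr (-d/(gam+d)) = cc powr (-d/(gam+d)) * R powr (-al)"
      unfolding K_def al_def using cc0 R1 by (simp add: powr_mult powr_powr field_simps)
    ultimately have "cc powr (d/(gam+d)) * R powr al * (cc powr (-d/(gam+d)) * R powr (-al))
       \<le> cc powr (d/(gam+d)) * R powr al * L powr (-be)"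
      by (intro mult_left_mono) auto
    moreover have "cc powr (d/(gam+d)) * R powr al * (cc powr (-d/(gam+d)) * R powr (-al)) = 1"
      using cc0 R1 by (simp add: powr_minus field_simps)
    ultimately show ?thesis by simp
  qed
  have Rge: "1 \<le> R powr al" unfolding al_def using R1 d1 gam by (intro ge_one_powr_ge_zero) auto
  obtain e :: 'a where e: "e \<in> Basis" using nonempty_Basis by blast
  have eA: "(s + L/2) *\<^sub>R e \<in> A" unfolding A_eq using e s1 L0 by simp
  hence Ane: "A \<noteq> {}" by auto
  have bdd: "bdd_above (g ` A)" using gb by (auto intro!: bdd_aboveI[of _ H])
  define m where "m = (SUP x\<in>A. g x)"
  have gm: "\<And>x. x \<in> A \<Longrightarrow> g x \<le> m" unfolding m_def using bdd by (simp add: cSUP_upper)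
  have m0: "0 \<le> m" using gm[OF eA] gb by (meson order_trans)
  have mH: "m \<le> H" unfolding m_def using Ane gb by (intro cSUP_least) auto
  have IJ: "I \<le> m powr (1-lam) * J"
  proof -
    have "I \<le> (LINT x:A|lborel. m powr (1-lam) * g x powr lam)"
      unfolding I_def
    proof (rule set_integral_mono[OF intg])
      show "set_integrable lborel A (\<lambda>x. m powr (1-lam) * g x powr lam)"
        using intgl by simp
      fix x assume xA: "x \<in> A"
      show "g x \<le> m powr (1-lam) * g x powr lam"
      proof (cases "g x = 0")
        case False
        hence gx: "0 < g x" using gb by (metis order_le_less)
        have "g x = g x powr (1-lam) * g x powr lam" using gx by (simp add: powr_add[symmetric])
        also have "\<dots> \<le> m powr (1-lam) * g x powr lam"
          using gx gm[OF xA] lam by (intro mult_right_mono powr_mono2) auto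
        finally show ?thesis .
      qed (use m0 in simp)
    qed
    thus ?thesis unfolding J_def by simp
  qed
  have main: "I powr p \<le> (N1 + N2) * R powr al * L powr (-be) * J"
  proof (cases "I = 0")
    case True
    then show ?thesis using N10 J0 by simp
  next
    case False
    hence Ipos: "0 < I" using I0 by simp
    have mpos: "0 < m"
    proof (rule ccontr)
      assume "\<not> 0 < m" hence "m = 0" using m0 by simp
      thus False using IJ Ipos by simp
    qed
    obtain x0 where x0A: "x0 \<in> A" and gx0: "m/2 < g x0"
      using less_cSUP_iff[OF Ane bdd, of "m/2"] mpos unfolding m_def by auto
    define rho where "rho = (m/(4*H)) powr (1/gam)"
    have rho0: "0 < rho" unfolding rho_def using mpos H1 by simp
    have rho1: "rho < 1"
    proof -
      have "(m/(4*H)) powr (1/gam) < 1 powr (1/gam)"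
        using mpos mH H1 gam by (intro powr_less_mono2) auto
      thus ?thesis unfolding rho_def by simp
    qed
    have rhog: "rho powr gam = m/(4*H)" unfolding rho_def using gam mpos H1 by (simp add: powr_powr)
    have gball: "m/4 \<le> g x" if "x \<in> ball x0 rho" for x
    proof -
      have nx: "norm (x0 - x) < rho" using that by (simp add: dist_norm)
      have "norm (x0 - x) powr gam \<le> rho powr gam" using nx gam by (intro powr_mono2) auto
      hence "H * norm (x0 - x) powr gam \<le> m/4" using rhog H1 by (simp add: field_simps)
      moreover have "\<bar>g x0 - g x\<bar> \<le> H * norm (x0 - x) powr gam" using hold by blast
      ultimately show ?thesis using gx0 by linarith
    qed
    define del where "del = min rho L / 4"
    have del0: "0 < del" unfolding del_def using rho0 L0 by simp
    have x0n: "s < norm x0" "norm x0 < s + L" using x0A unfolding A_eq by auto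
    obtain y where y: "ball y del \<subseteq> A \<inter> ball x0 rho"
      using shell_ball[OF _ x0n del0, of rho] s1 unfolding A_eq del_def by auto
    define Jl where "Jl = (m/4) powr lam * (w * del ^ DIM('a))"
    have Jl0: "0 < Jl" unfolding Jl_def using mpos w0 del0 by simp
    have JlJ: "Jl \<le> J"
    proof -
      define B where "B = ball y del"
      have BA: "B \<subseteq> A" using y B_def by auto
      define c where "c = (m/4) powr lam"
      have ind: "(\<lambda>x. indicator A x *\<^sub>R (c * indicator B x)) = (\<lambda>x. c * indicator B x :: real)"
        using BA by (auto simp: indicator_def fun_eq_iff)
      have Bfin: "emeasure lborel B < \<infinity>" unfolding B_def by (rule emeasure_lborel_ball_finite)
      have intB: "integrable lborel (\<lambda>x. c * indicator B x :: real)"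
        using Bfin by (intro integrable_mult_right integrable_real_indicator) (auto simp: B_def)
      have mB: "measure lborel B = w * del ^ DIM('a)"
        unfolding B_def measure_def w_def d_def using del0 by (simp add: emeasure_ball)
      have "Jl = (LINT x:A|lborel. c * indicator B x)"
        unfolding set_lebesgue_integral_def ind Jl_def c_def[symmetric]
        using Bfin mB by (simp add: B_def)
      also have "\<dots> \<le> J" unfolding J_def
      proof (rule set_integral_mono[OF _ intgl])
        show "set_integrable lborel A (\<lambda>x. c * indicator B x)"
          unfolding set_integrable_def ind by (rule intB)
        fix x assume xA: "x \<in> A"
        show "c * indicator B x \<le> g x powr lam"
        proof (cases "x \<in> B")
          case True
          hence "m/4 \<le> g x" using gball y B_def by auto
          thus ?thesis using True mpos lam by (simp add: c_def powr_mono2)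
        qed simp
      qed
      finally show ?thesis .
    qed
    have core: "I powr p \<le> m powr ((1-lam)*p) * Jl powr (p-1) * J"
      by (rule core_ineq[OF I0 IJ Jl0 JlJ p01(1) _ m0]) (use p01 in simp)
    have RL0: "0 \<le> R powr al * L powr (-be)" by simp
    have key: "m powr ((1-lam)*p) * Jl powr (p-1) \<le> (N1 + N2) * R powr al * L powr (-be)"
    proof (cases "rho \<le> L")
      case True
      hence dl: "del = rho/4" unfolding del_def by simp
      have pw: "(rho/4) ^ DIM('a) = (rho/4) powr d" unfolding d_def using rho0 by (simp add: powr_realpow)
      have rd: "rho powr d = m powr (d/gam) / (4*H) powr (d/gam)"
        unfolding rho_def using mpos H1 by (simp add: powr_powr powr_divide)
      have Jl_eq: "Jl = c1 * m powr (lam + d/gam)"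
        unfolding Jl_def dl pw c1_def using rd by (simp add: powr_divide powr_add powr_minus field_simps)
      have ex0: "(1-lam)*p + (lam + d/gam)*(p-1) = 0"
      proof -
        have "gam + d \<noteq> 0" "gam \<noteq> 0" using gam d1 by auto
        hence pm1: "p - 1 = - gam*(1-lam)/(gam+d)" unfolding p_def by (simp add: field_simps)
        have q: "(lam + d/gam)*gam = gam*lam + d" using \<open>gam \<noteq> 0\<close> by (simp add: field_simps)
        have "(lam + d/gam)*(p-1) = - ((lam + d/gam)*gam)*(1-lam)/(gam+d)" unfolding pm1 by simp
        also have "\<dots> = - (1-lam)*p" unfolding q p_def by (simp add: algebra_simps)
        finally show ?thesis by (simp add: algebra_simps)
      qed
      have "m powr ((1-lam)*p) * Jl powr (p-1)
          = c1 powr (p-1) * (m powr ((1-lam)*p) * m powr ((lam + d/gam)*(p-1)))"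
        unfolding Jl_eq using c10 mpos by (simp add: powr_mult powr_powr)
      also have "m powr ((1-lam)*p) * m powr ((lam + d/gam)*(p-1)) = 1"
        using ex0 mpos by (simp add: powr_add[symmetric])
      finally have eq: "m powr ((1-lam)*p) * Jl powr (p-1) = c1 powr (p-1)" by simp
      have "c1 powr (p-1) \<le> c1 powr (p-1) * (cc powr (d/(gam+d)) * R powr al * L powr (-be))"
        using mult_left_mono[OF Rab, of "c1 powr (p-1)"] by simp
      also have "\<dots> = N1 * (R powr al * L powr (-be))" unfolding N1_def by (simp add: ac_simps)
      also have "\<dots> \<le> (N1 + N2) * (R powr al * L powr (-be))"
        using N10 RL0 by (intro mult_right_mono) auto
      finally show ?thesis using eq by (simp add: ac_simps)
    next
      case False
      hence dl: "del = L/4" unfolding del_def by simp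
      have L1: "L \<le> 1" using False rho1 by simp
      have pw: "(L/4) ^ DIM('a) = (L/4) powr d" unfolding d_def using L0 by (simp add: powr_realpow)
      have eq: "m powr ((1-lam)*p) * Jl powr (p-1)
          = 4 powr ((lam+d)*(1-p)) * w powr (p-1) * (m powr (p-lam) * L powr (d*(p-1)))"
        unfolding Jl_def dl pw using mpos L0 w0
        by (simp add: powr_mult powr_divide powr_powr powr_add[symmetric] powr_minus field_simps)
      have gd: "0 < gam + d" using gam d1 by simp
      have pl0: "p - lam = d*(1-lam)/(gam+d)" unfolding p_def using gd by (simp add: field_simps)
      have pl: "0 \<le> p - lam" unfolding pl0 using lam d1 gd by simp
      have pm0: "d*(p-1) = - (d*(gam*(1-lam)))/(gam+d)" unfolding p_def using gd by (simp add: field_simps)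
      have "gam*(1-lam) = gam - gam*lam" by (simp add: algebra_simps)
      hence "gam*(1-lam) \<le> gam+d-1" using gl0 d1 by linarith
      hence "d*(gam*(1-lam)) \<le> d*(gam+d-1)" using d1 by (intro mult_left_mono) auto
      hence "d*(gam*(1-lam))/(gam+d) \<le> d*(gam+d-1)/(gam+d)" using gd by (simp add: divide_right_mono)
      hence e1: "- be \<le> d*(p-1)" unfolding pm0 be_def by simp
      have "m powr (p-lam) * L powr (d*(p-1)) \<le> H powr (p-lam) * L powr (-be)"
        using pl mpos mH L0 L1 e1 by (intro mult_mono powr_mono2 powr_mono') auto
      hence "4 powr ((lam+d)*(1-p)) * w powr (p-1) * (m powr (p-lam) * L powr (d*(p-1)))
          \<le> 4 powr ((lam+d)*(1-p)) * w powr (p-1) * (H powr (p-lam) * L powr (-be))"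
        by (intro mult_left_mono) auto
      hence "m powr ((1-lam)*p) * Jl powr (p-1) \<le> N2 * L powr (-be)"
        unfolding eq N2_def by (simp add: ac_simps)
      also have "\<dots> \<le> N2 * (R powr al * L powr (-be))"
        using mult_right_mono[OF Rge, of "L powr (-be)"] N10 by (intro mult_left_mono) auto
      also have "\<dots> \<le> (N1 + N2) * (R powr al * L powr (-be))"
        using N10 RL0 by (intro mult_right_mono) auto
      finally show ?thesis by (simp add: ac_simps)
    qed
    show ?thesis using core key J0 by (meson mult_right_mono order_trans)
  qed
  thus ?thesis unfolding I_def J_def A_def p_def al_def be_def L_def d_def NN[unfolded d_def] .
qed

theorem lemma4p2:
  fixes gam lam H :: real
  assumes "0 < gam" "gam < 1" "0 < lam" "lam < 1" "H > 1"
  shows "\<exists>N::real. \<forall>(g :: 'a::euclidean_space \<Rightarrow> real) (a::real) (b::real) (R::real) (r::real).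
      0 \<le> a \<and> a < b \<and>
      bounded (range g) \<and> continuous_on UNIV g \<and>
      (\<forall>x. 0 \<le> g x \<and> g x \<le> H) \<and>
      (\<forall>x y. \<bar>g x - g y\<bar> \<le> H * norm (x - y) powr gam) \<and>
      R > 1 \<and> 0 < r \<and>
      r < min (R / b)
        (1 / (b - a) * (2 powr (- (gam + 1) / gam) * H powr (- real DIM('a) / gam)
             * R powr (real DIM('a) - 1)
             * (real DIM('a) * pi powr (real DIM('a) / 2) / Gamma (real DIM('a) / 2 + 1)))
           powr (1 / (gam + real DIM('a) - 1)))
      \<longrightarrow>
      (LINT x:{x. R + a * r < norm x \<and> norm x < R + b * r}|lborel. g x)
          powr ((gam * lam + real DIM('a)) / (gam + real DIM('a)))
      \<le> N * R powr (real DIM('a) * (real DIM('a) - 1) / (gam + real DIM('a)))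
          * (r * (b - a)) powr (- (real DIM('a) * (gam + real DIM('a) - 1) / (gam + real DIM('a))))
          * (LINT x:{x. R + a * r < norm x \<and> norm x < R + b * r}|lborel. g x powr lam)"
  proof -
  show ?thesis
    apply (rule exI[of _ "NN gam lam H (real DIM('a))"])
    apply (intro allI impI)
    apply (elim conjE)
    apply (rule main_est[OF assms])
    apply assumption+
    done
qed

end
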